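(* For $\kappa$ countably infinite, the lattice $S$ is a countable bounded modular lattice.
   Context: $\mathcal{F}(\kappa)$ is the Boolean lattice of subsets $X\subseteq\kappa$ that are finite or cofinite. For sets $A,B,C$, $\mu(A,B,C)=(A\cap B)\cup(A\cap C)\cup(B\cap C)$. A triple is balanced if $A\cap B=A\cap C=B\cap C$. $S$ is the set of balanced triples $(A,B,C)\in\mathcal{F}(\kappa)^3$ with $C\setminus\mu(A,B,C)$ finite, ordered componentwise; it is a lattice with componentwise intersection as meet and join $(A,B,C)\vee(A',B',C')=(U_1\cup m,U_2\cup m,U_3\cup m)$ where $U_1=A\cup A'$, $U_2=B\cup B'$, $U_3=C\cup C'$, $m=\mu(U_1,U_2,U_3)$. *)

theory Defs
  imports Main "HOL-Library.Countable_Set"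
begin

definition fincof :: "'a set \<Rightarrow> 'a set set" where
  "fincof K = {X. X \<subseteq> K \<and> (finite X \<or> finite (K - X))}"

definition med :: "'a set \<Rightarrow> 'a set \<Rightarrow> 'a set \<Rightarrow> 'a set" where
  "med A B C = (A \<inter> B) \<union> (A \<inter> C) \<union> (B \<inter> C)"

definition balanced :: "'a set \<Rightarrow> 'a set \<Rightarrow> 'a set \<Rightarrow> bool" where
  "balanced A B C \<longleftrightarrow> A \<inter> B = A \<inter> C \<and> A \<inter> C = B \<inter> C"

definition Striples :: "'a set \<Rightarrow> ('a set \<times> 'a set \<times> 'a set) set" where
  "Striples K = {(A, B, C). A \<in> fincof K \<and> B \<in> fincof K \<and> C \<in> fincof K
      \<and> balanced A B C \<and> finite (C - med A B C)}"

definition tle :: "'a set \<times> 'a set \<times> 'a set \<Rightarrow> 'a set \<times> 'a set \<times> 'a set \<Rightarrow> bool" where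
  "tle x y \<longleftrightarrow> (case x of (A, B, C) \<Rightarrow> case y of (A', B', C') \<Rightarrow>
      A \<subseteq> A' \<and> B \<subseteq> B' \<and> C \<subseteq> C')"

definition tmeet :: "'a set \<times> 'a set \<times> 'a set \<Rightarrow> 'a set \<times> 'a set \<times> 'a set \<Rightarrow> 'a set \<times> 'a set \<times> 'a set" where
  "tmeet x y = (case x of (A, B, C) \<Rightarrow> case y of (A', B', C') \<Rightarrow>
      (A \<inter> A', B \<inter> B', C \<inter> C'))"

definition tjoin :: "'a set \<times> 'a set \<times> 'a set \<Rightarrow> 'a set \<times> 'a set \<times> 'a set \<Rightarrow> 'a set \<times> 'a set \<times> 'a set" where
  "tjoin x y = (case x of (A, B, C) \<Rightarrow> case y of (A', B', C') \<Rightarrow>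
      (let U1 = A \<union> A'; U2 = B \<union> B'; U3 = C \<union> C'; m = med U1 U2 U3
       in (U1 \<union> m, U2 \<union> m, U3 \<union> m)))"

definition is_lattice_with :: "'b set \<Rightarrow> ('b \<Rightarrow> 'b \<Rightarrow> bool) \<Rightarrow> ('b \<Rightarrow> 'b \<Rightarrow> 'b) \<Rightarrow> ('b \<Rightarrow> 'b \<Rightarrow> 'b) \<Rightarrow> bool" where
  "is_lattice_with S le mt jn \<longleftrightarrow>
     (\<forall>x\<in>S. le x x) \<and>
     (\<forall>x\<in>S. \<forall>y\<in>S. le x y \<and> le y x \<longrightarrow> x = y) \<and>
     (\<forall>x\<in>S. \<forall>y\<in>S. \<forall>z\<in>S. le x y \<and> le y z \<longrightarrow> le x z) \<and>
     (\<forall>x\<in>S. \<forall>y\<in>S. mt x y \<in> S \<and> le (mt x y) x \<and> le (mt x y) y \<and>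
        (\<forall>z\<in>S. le z x \<and> le z y \<longrightarrow> le z (mt x y))) \<and>
     (\<forall>x\<in>S. \<forall>y\<in>S. jn x y \<in> S \<and> le x (jn x y) \<and> le y (jn x y) \<and>
        (\<forall>z\<in>S. le x z \<and> le y z \<longrightarrow> le (jn x y) z))"

definition is_bounded :: "'b set \<Rightarrow> ('b \<Rightarrow> 'b \<Rightarrow> bool) \<Rightarrow> bool" where
  "is_bounded S le \<longleftrightarrow> (\<exists>b\<in>S. \<exists>t\<in>S. \<forall>x\<in>S. le b x \<and> le x t)"

definition is_modular :: "'b set \<Rightarrow> ('b \<Rightarrow> 'b \<Rightarrow> bool) \<Rightarrow> ('b \<Rightarrow> 'b \<Rightarrow> 'b) \<Rightarrow> ('b \<Rightarrow> 'b \<Rightarrow> 'b) \<Rightarrow> bool" where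
  "is_modular S le mt jn \<longleftrightarrow>
     (\<forall>x\<in>S. \<forall>y\<in>S. \<forall>z\<in>S. le x z \<longrightarrow> jn x (mt y z) = mt (jn x y) z)"

end

theory Submission
  imports Defs
begin

lemma fincof_Int: "A \<in> fincof K \<Longrightarrow> B \<in> fincof K \<Longrightarrow> A \<inter> B \<in> fincof K"
proof -
  assume a: "A \<in> fincof K" and b: "B \<in> fincof K"
  have "K - (A \<inter> B) = (K - A) \<union> (K - B)" by blast
  thus ?thesis using a b unfolding fincof_def by auto
qed

lemma fincof_Un: "A \<in> fincof K \<Longrightarrow> B \<in> fincof K \<Longrightarrow> A \<union> B \<in> fincof K"
proof -
  assume a: "A \<in> fincof K" and b: "B \<in> fincof K"
  have "K - (A \<union> B) \<subseteq> K - A" "K - (A \<union> B) \<subseteq> K - B" by blast+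
  thus ?thesis using a b unfolding fincof_def by (auto intro: finite_subset)
qed

lemma med_bal: "balanced A B C \<Longrightarrow> med A B C = A \<inter> B"
  unfolding balanced_def med_def by blast

lemma memS: "(A, B, C) \<in> Striples K \<longleftrightarrow> A \<in> fincof K \<and> B \<in> fincof K \<and> C \<in> fincof K
      \<and> balanced A B C \<and> finite (C - med A B C)"
  unfolding Striples_def by simp

lemma countable_fincof:
  assumes "countable K" shows "countable (fincof K)"
proof -
  have c1: "countable {X. finite X \<and> X \<subseteq> K}"
    using countable_Collect_finite_subset[OF assms] .
  have "fincof K \<subseteq> {X. finite X \<and> X \<subseteq> K} \<union> (\<lambda>Y. K - Y) ` {X. finite X \<and> X \<subseteq> K}"
  proof
    fix X assume "X \<in> fincof K"
    hence X: "X \<subseteq> K" "finite X \<or> finite (K - X)" unfolding fincof_def by auto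
    show "X \<in> {X. finite X \<and> X \<subseteq> K} \<union> (\<lambda>Y. K - Y) ` {X. finite X \<and> X \<subseteq> K}"
    proof (cases "finite X")
      case True thus ?thesis using X by auto
    next
      case False
      hence "finite (K - X)" using X by auto
      moreover have "X = K - (K - X)" using X by blast
      ultimately show ?thesis by blast
    qed
  qed
  thus ?thesis using c1 by (meson countable_Un countable_image countable_subset)
qed

lemma S_sub: "Striples K \<subseteq> fincof K \<times> fincof K \<times> fincof K"
  unfolding Striples_def by auto

lemma meet_closed:
  assumes "(A, B, C) \<in> Striples K" "(A', B', C') \<in> Striples K"
  shows "(A \<inter> A', B \<inter> B', C \<inter> C') \<in> Striples K"
proof -
  have b: "balanced A B C" "balanced A' B' C'" using assms memS by blast+
  have bal: "balanced (A \<inter> A') (B \<inter> B') (C \<inter> C')" using b unfolding balanced_def by blast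
  have "C \<inter> C' - med (A \<inter> A') (B \<inter> B') (C \<inter> C') \<subseteq> (C - med A B C) \<union> (C' - med A' B' C')"
    using b bal by (simp add: med_bal) (auto simp: balanced_def)
  moreover have "finite ((C - med A B C) \<union> (C' - med A' B' C'))" using assms memS by blast
  ultimately have "finite (C \<inter> C' - med (A \<inter> A') (B \<inter> B') (C \<inter> C'))" by (rule finite_subset)
  thus ?thesis using assms bal by (simp add: memS fincof_Int)
qed

lemma join_closed:
  assumes "(A, B, C) \<in> Striples K" "(A', B', C') \<in> Striples K"
  defines "m \<equiv> med (A \<union> A') (B \<union> B') (C \<union> C')"
  shows "(A \<union> A' \<union> m, B \<union> B' \<union> m, C \<union> C' \<union> m) \<in> Striples K"
proof -
  have b: "balanced A B C" "balanced A' B' C'" using assms memS by blast+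
  have f: "A \<in> fincof K" "B \<in> fincof K" "C \<in> fincof K" "A' \<in> fincof K" "B' \<in> fincof K" "C' \<in> fincof K"
    using assms memS by blast+
  have mf: "m \<in> fincof K" unfolding m_def med_def using f by (meson fincof_Int fincof_Un)
  have bal: "balanced (A \<union> A' \<union> m) (B \<union> B' \<union> m) (C \<union> C' \<union> m)" unfolding balanced_def m_def med_def by blast
  have me: "med (A \<union> A' \<union> m) (B \<union> B' \<union> m) (C \<union> C' \<union> m) = m" unfolding m_def med_def by blast
  have "C \<union> C' \<union> m - m \<subseteq> (C - med A B C) \<union> (C' - med A' B' C')"
    unfolding m_def med_def by blast
  moreover have "finite ((C - med A B C) \<union> (C' - med A' B' C'))" using assms memS by blast
  ultimately have "finite (C \<union> C' \<union> m - m)" by (rule finite_subset)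
  thus ?thesis using bal me f mf by (simp add: memS fincof_Un)
qed

lemma modular_pt:
  assumes "balanced A1 A2 A3" "balanced B1 B2 B3" "balanced C1 C2 C3"
    "A1 \<subseteq> C1" "A2 \<subseteq> C2" "A3 \<subseteq> C3"
  defines "U1 \<equiv> A1 \<union> B1 \<inter> C1" and "U2 \<equiv> A2 \<union> B2 \<inter> C2" and "U3 \<equiv> A3 \<union> B3 \<inter> C3"
  defines "V1 \<equiv> A1 \<union> B1" and "V2 \<equiv> A2 \<union> B2" and "V3 \<equiv> A3 \<union> B3"
  shows "U1 \<union> med U1 U2 U3 = (V1 \<union> med V1 V2 V3) \<inter> C1"
    "U2 \<union> med U1 U2 U3 = (V2 \<union> med V1 V2 V3) \<inter> C2"
    "U3 \<union> med U1 U2 U3 = (V3 \<union> med V1 V2 V3) \<inter> C3"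
  using assms unfolding balanced_def med_def by (auto simp: set_eq_iff)

theorem corollary3p4:
  fixes K :: "'a set"
  assumes "countable K" and "infinite K"
  shows "countable (Striples K)
    \<and> is_lattice_with (Striples K) tle tmeet tjoin
    \<and> is_bounded (Striples K) tle
    \<and> is_modular (Striples K) tle tmeet tjoin"
proof (intro conjI)
  show "countable (Striples K)"
  proof -
    have c: "countable (fincof K)" using countable_fincof[OF assms(1)] .
    have "countable (fincof K \<times> fincof K \<times> fincof K)" using c by (intro countable_SIGMA) auto
    thus ?thesis using S_sub countable_subset by blast
  qed
  show "is_lattice_with (Striples K) tle tmeet tjoin"
    unfolding is_lattice_with_def
  proof (intro conjI ballI impI)
    fix x assume "x \<in> Striples K" thus "tle x x" by (auto simp: tle_def)
  next
    fix x y assume "x \<in> Striples K" "y \<in> Striples K" "tle x y \<and> tle y x"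
    thus "x = y" by (auto simp: tle_def split: prod.splits)
  next
    fix x y z assume "x \<in> Striples K" "y \<in> Striples K" "z \<in> Striples K" "tle x y \<and> tle y z"
    thus "tle x z" by (auto simp: tle_def split: prod.splits)
  next
    fix x y assume "x \<in> Striples K" "y \<in> Striples K"
    thus "tmeet x y \<in> Striples K" by (auto simp: tmeet_def intro: meet_closed split: prod.splits)
  next
    fix x y assume "x \<in> Striples K" "y \<in> Striples K"
    thus "tle (tmeet x y) x" "tle (tmeet x y) y" by (auto simp: tmeet_def tle_def split: prod.splits)
  next
    fix x y z assume "x \<in> Striples K" "y \<in> Striples K" "z \<in> Striples K" "tle z x \<and> tle z y"
    thus "tle z (tmeet x y)" by (auto simp: tmeet_def tle_def split: prod.splits)
  next
    fix x y assume "x \<in> Striples K" "y \<in> Striples K"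
    thus "tjoin x y \<in> Striples K" by (auto simp: tjoin_def Let_def intro: join_closed split: prod.splits)
  next
    fix x y assume "x \<in> Striples K" "y \<in> Striples K"
    thus "tle x (tjoin x y)" "tle y (tjoin x y)" by (auto simp: tjoin_def tle_def Let_def split: prod.splits)
  next
    fix x y z assume "x \<in> Striples K" "y \<in> Striples K" "z \<in> Striples K" "tle x z \<and> tle y z"
    thus "tle (tjoin x y) z"
      by (auto simp: tjoin_def tle_def Let_def memS balanced_def med_def split: prod.splits)
  qed
  show "is_bounded (Striples K) tle"
    unfolding is_bounded_def
  proof -
    have b: "({}, {}, {}) \<in> Striples K" by (simp add: memS fincof_def balanced_def med_def)
    have t: "(K, K, K) \<in> Striples K" by (simp add: memS fincof_def balanced_def med_def)
    have "\<forall>x\<in>Striples K. tle ({}, {}, {}) x \<and> tle x (K, K, K)"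
      by (auto simp: tle_def Striples_def fincof_def split: prod.splits)
    thus "\<exists>b\<in>Striples K. \<exists>t\<in>Striples K. \<forall>x\<in>Striples K. tle b x \<and> tle x t"
      using b t by blast
  qed
  show "is_modular (Striples K) tle tmeet tjoin"
    unfolding is_modular_def
  proof (intro ballI impI)
    fix x y z assume xyz: "x \<in> Striples K" "y \<in> Striples K" "z \<in> Striples K" "tle x z"
    obtain A1 A2 A3 where x: "x = (A1, A2, A3)" by (cases x) auto
    obtain B1 B2 B3 where y: "y = (B1, B2, B3)" by (cases y) auto
    obtain C1 C2 C3 where z: "z = (C1, C2, C3)" by (cases z) auto
    have b: "balanced A1 A2 A3" "balanced B1 B2 B3" "balanced C1 C2 C3"
      using xyz x y z memS by blast+
    have s: "A1 \<subseteq> C1" "A2 \<subseteq> C2" "A3 \<subseteq> C3" using xyz(4) x z by (auto simp: tle_def)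
    note M = modular_pt[OF b s]
    show "tjoin x (tmeet y z) = tmeet (tjoin x y) z"
      using M by (simp add: x y z tjoin_def tmeet_def Let_def Int_Un_distrib)
  qed
qed

end
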